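(* Let $\Gamma=(V,E)$ be a finite connected undirected graph and let $(u_{ij})$ be the generators of $C(G_{aut}^+(\Gamma))$. Let $i,j,k,l\in V$ with $d(i,k)=d(j,l)=m$. Let $q\in V$ with $d(j,q)=s$ and $d(q,l)=t$, and suppose that $u_{kl}u_{aq}=u_{aq}u_{kl}$ for all $a\in V$ with $d(a,k)=t$. Then $$u_{ij}u_{kl}=u_{ij}u_{kl}\sum_{p\in V:\ d(l,p)=m,\ d(p,q)=s}u_{ip}.$$ In particular, if $m=2$ and $G_{aut}^+(\Gamma)=G_{aut}^*(\Gamma)$, then for any common neighbor $q$ of $j$ and $l$, $$u_{ij}u_{kl}=u_{ij}u_{kl}\sum_{p\in V:\ d(l,p)=2,\ (p,q)\in E}u_{ip}.$$
   Context: $\Gamma$ is a finite simple connected undirected graph on $V=\{1,\dots,n\}$, $d$ the graph distance. $C(G_{aut}^+(\Gamma))$ is the universal unital $C^*$-algebra generated by $u_{ij}$, $1\le i,j\le n$, with relations: (R1) $u_{ij}=u_{ij}^*=u_{ij}^2$; (R2) $\sum_{l} u_{il}=1=\sum_{l} u_{li}$ for all $i$; (R3) $u_{ij}u_{kl}=u_{kl}u_{ij}=0$ whenever exactly one of $(i,k)\in E$, $(j,l)\in E$ holds. "$G_{aut}^+(\Gamma)=G_{aut}^*(\Gamma)$" means $u_{ij}u_{kl}=u_{kl}u_{ij}$ for all $(i,k)\in E$, $(j,l)\in E$. *)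

theory Defs
  imports Complex_Main "HOL-Analysis.Analysis"
begin

definition simple_graph :: "nat \<Rightarrow> (nat \<Rightarrow> nat \<Rightarrow> bool) \<Rightarrow> bool" where
  "simple_graph n E \<longleftrightarrow>
     (\<forall>x y. E x y \<longrightarrow> x \<in> {1..n} \<and> y \<in> {1..n}) \<and>
     (\<forall>x y. E x y \<longrightarrow> E y x) \<and> (\<forall>x. \<not> E x x)"

definition walk_len :: "(nat \<Rightarrow> nat \<Rightarrow> bool) \<Rightarrow> nat \<Rightarrow> nat \<Rightarrow> nat \<Rightarrow> bool" where
  "walk_len E m i j \<longleftrightarrow>
     (\<exists>f :: nat \<Rightarrow> nat. f 0 = i \<and> f m = j \<and> (\<forall>r<m. E (f r) (f (Suc r))))"

definition connected_graph :: "nat \<Rightarrow> (nat \<Rightarrow> nat \<Rightarrow> bool) \<Rightarrow> bool" where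
  "connected_graph n E \<longleftrightarrow> (\<forall>i\<in>{1..n}. \<forall>j\<in>{1..n}. \<exists>m. walk_len E m i j)"

definition gdist :: "(nat \<Rightarrow> nat \<Rightarrow> bool) \<Rightarrow> nat \<Rightarrow> nat \<Rightarrow> nat" where
  "gdist E i j = (LEAST m. walk_len E m i j)"

definition cstar_algebra ::
  "(complex \<Rightarrow> 'a::{real_normed_algebra_1,banach} \<Rightarrow> 'a) \<Rightarrow> ('a \<Rightarrow> 'a) \<Rightarrow> bool" where
  "cstar_algebra scC st \<longleftrightarrow>
     (\<forall>x. scC 1 x = x) \<and>
     (\<forall>a b x. scC a (scC b x) = scC (a * b) x) \<and>
     (\<forall>a x y. scC a (x + y) = scC a x + scC a y) \<and>
     (\<forall>a b x. scC (a + b) x = scC a x + scC b x) \<and>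
     (\<forall>r x. scC (complex_of_real r) x = scaleR r x) \<and>
     (\<forall>a x y. scC a (x * y) = scC a x * y) \<and>
     (\<forall>a x y. scC a (x * y) = x * scC a y) \<and>
     (\<forall>a x. norm (scC a x) = cmod a * norm x) \<and>
     (\<forall>x. st (st x) = x) \<and>
     (\<forall>x y. st (x + y) = st x + st y) \<and>
     (\<forall>x y. st (x * y) = st y * st x) \<and>
     (\<forall>a x. st (scC a x) = scC (cnj a) (st x)) \<and>
     (\<forall>x. norm (st x * x) = (norm x)\<^sup>2)"

text \<open>A family u satisfying (R1)-(R3) in a C*-algebra. By the universal property,
an identity among the generators holds in C(G_aut^+(Gamma)) iff it holds for every
such family in every unital C*-algebra.\<close>

definition qaut_rep ::
  "nat \<Rightarrow> (nat \<Rightarrow> nat \<Rightarrow> bool) \<Rightarrow> ('a::{real_normed_algebra_1,banach} \<Rightarrow> 'a)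
     \<Rightarrow> (nat \<Rightarrow> nat \<Rightarrow> 'a) \<Rightarrow> bool" where
  "qaut_rep n E st u \<longleftrightarrow>
     (\<forall>i\<in>{1..n}. \<forall>j\<in>{1..n}. u i j = st (u i j) \<and> u i j = u i j * u i j) \<and>
     (\<forall>i\<in>{1..n}. (\<Sum>l\<in>{1..n}. u i l) = 1 \<and> (\<Sum>l\<in>{1..n}. u l i) = 1) \<and>
     (\<forall>i\<in>{1..n}. \<forall>j\<in>{1..n}. \<forall>k\<in>{1..n}. \<forall>l\<in>{1..n}.
        E i k \<noteq> E j l \<longrightarrow> u i j * u k l = 0 \<and> u k l * u i j = 0)"

text \<open>G_aut^+(Gamma) = G_aut^*(Gamma) (for the given family).\<close>
definition gstar_rel :: "nat \<Rightarrow> (nat \<Rightarrow> nat \<Rightarrow> bool) \<Rightarrow> (nat \<Rightarrow> nat \<Rightarrow> 'a::ring) \<Rightarrow> bool" where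
  "gstar_rel n E u \<longleftrightarrow>
     (\<forall>i\<in>{1..n}. \<forall>j\<in>{1..n}. \<forall>k\<in>{1..n}. \<forall>l\<in>{1..n}.
        E i k \<and> E j l \<longrightarrow> u i j * u k l = u k l * u i j)"

end

theory Submission
  imports Defs
begin


lemma e2_lemma: fixes c :: "'a::real_normed_algebra_1"
  shows "1 + (2 * a) *\<^sub>R c + c * c = ((1 + a) / 2) *\<^sub>R ((1 + c) * (1 + c)) + ((1 - a) / 2) *\<^sub>R ((1 - c) * (1 - c))"
proof -
  have g: "\<alpha> *\<^sub>R ((1 + c) * (1 + c)) + \<beta> *\<^sub>R ((1 - c) * (1 - c))
     = (\<alpha> + \<beta>) *\<^sub>R 1 + (2 * \<alpha> - 2 * \<beta>) *\<^sub>R c + (\<alpha> + \<beta>) *\<^sub>R (c * c)" for \<alpha> \<beta>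
  proof -
    have "(1 + c) * (1 + c) = 1 + 2 *\<^sub>R c + c * c" "(1 - c) * (1 - c) = 1 - 2 *\<^sub>R c + c * c"
      by (simp_all add: algebra_simps scaleR_2)
    thus ?thesis by (simp add: scaleR_add_right scaleR_diff_right scaleR_add_left scaleR_diff_left mult.commute)
  qed
  show ?thesis unfolding g by (simp add: field_simps)
qed

definition posD :: "'a::real_normed_algebra_1 \<Rightarrow> bool" where
  "posD h \<longleftrightarrow> (\<exists>t\<ge>0. norm (of_real t - h) \<le> t)"

lemma posD_add: assumes "posD x" "posD y" shows "posD (x + y)"
proof -
  obtain t s where t: "t \<ge> 0" "norm (of_real t - x) \<le> t" and s: "s \<ge> 0" "norm (of_real s - y) \<le> s"
    using assms unfolding posD_def by blast
  have "norm (of_real (t + s) - (x + y)) = norm ((of_real t - x) + (of_real s - y))"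
    by (simp add: algebra_simps)
  also have "\<dots> \<le> t + s" using t s by (intro order_trans[OF norm_triangle_ineq]) simp
  finally show ?thesis unfolding posD_def using t s by (intro exI[of _ "t + s"]) simp
qed

lemma posD_sum: "finite A \<Longrightarrow> (\<And>x. x \<in> A \<Longrightarrow> posD (h x)) \<Longrightarrow> posD (sum h A)"
proof (induction A rule: finite_induct)
  case empty then show ?case unfolding posD_def by (intro exI[of _ 0]) simp
next
  case (insert x F) then show ?case by (simp add: posD_add)
qed


context
  fixes scC :: "complex \<Rightarrow> 'a::{real_normed_algebra_1,banach} \<Rightarrow> 'a" and st :: "'a \<Rightarrow> 'a"
  assumes C: "cstar_algebra scC st"
begin

lemma st_add: "st (x + y) = st x + st y" using C by (simp add: cstar_algebra_def)
lemma st_mult: "st (x * y) = st y * st x" using C by (simp add: cstar_algebra_def)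
lemma st_st: "st (st x) = x" using C by (simp add: cstar_algebra_def)
lemma cstar_id: "norm (st x * x) = (norm x)\<^sup>2" using C by (simp add: cstar_algebra_def)
lemma S_one: "scC 1 x = x" using C by (simp add: cstar_algebra_def)
lemma S_S: "scC a (scC b x) = scC (a * b) x" using C by (simp add: cstar_algebra_def)
lemma S_add_left: "scC (a + b) x = scC a x + scC b x" using C by (simp add: cstar_algebra_def)
lemma S_add_right: "scC a (x + y) = scC a x + scC a y" using C by (simp add: cstar_algebra_def)
lemma S_real: "scC (complex_of_real r) x = r *\<^sub>R x" using C by (simp add: cstar_algebra_def)
lemma S_mult1: "scC a (x * y) = scC a x * y" using C by (simp add: cstar_algebra_def)
lemma S_mult2: "scC a (x * y) = x * scC a y" using C unfolding cstar_algebra_def by meson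
lemma st_S: "st (scC a x) = scC (cnj a) (st x)" using C by (simp add: cstar_algebra_def)

lemma st_zero: "st 0 = 0"
  using st_add[of 0 0] by simp
lemma st_one: "st 1 = 1"
proof -
  have "st (st 1 * 1) = st 1 * st (st 1)" by (rule st_mult)
  thus ?thesis by (simp add: st_st)
qed
lemma st_minus: "st (- x) = - st x"
  using st_add[of x "-x"] st_zero by (metis add.inverse_unique right_minus)
lemma st_diff: "st (x - y) = st x - st y"
  using st_add[of x "-y"] st_minus[of y] by simp
lemma S_zero: "scC 0 x = 0"
  using S_add_left[of 0 0 x] by simp
lemma S_mult: "scC a x * scC b y = scC (a * b) (x * y)"
  by (metis S_S S_mult1 S_mult2)
lemma st_scaleR: "st (r *\<^sub>R x) = r *\<^sub>R st x"
  by (metis S_real st_S complex_cnj_complex_of_real)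

lemma proj_norm: assumes "p * p = p" "st p = p" shows "norm p \<le> 1"
proof -
  have "(norm p)\<^sup>2 = norm p" using cstar_id[of p] assms by simp
  hence "norm p = 0 \<or> norm p = 1" by (simp add: power2_eq_square)
  thus ?thesis by auto
qed

lemma sa_pow: "st g = g \<Longrightarrow> st (g ^ n) = g ^ n"
  by (induction n) (auto simp: st_one st_mult power_commutes)

lemma sa_pow2: assumes "st g = g" shows "norm (g ^ (2 ^ k)) = norm g ^ (2 ^ k)"
proof (induction k)
  case 0 then show ?case by simp
next
  case (Suc k)
  have "g ^ (2 ^ Suc k) = g ^ (2 ^ k) * g ^ (2 ^ k)" by (simp add: power_add[symmetric] mult_2)
  hence "norm (g ^ (2 ^ Suc k)) = norm (st (g ^ (2 ^ k)) * g ^ (2 ^ k))"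
    using sa_pow[OF assms] by simp
  also have "\<dots> = (norm g ^ (2 ^ k))\<^sup>2" using cstar_id Suc by simp
  also have "\<dots> = norm g ^ (2 ^ Suc k)" by (simp add: power_mult[symmetric] mult.commute)
  finally show ?case .
qed

lemma sa_bound: assumes "st g = g" "\<And>k. norm (g ^ (2 ^ k)) \<le> 2" shows "norm g \<le> 1"
proof (rule ccontr)
  assume "\<not> norm g \<le> 1"
  hence g1: "1 < norm g" by simp
  obtain k where k: "2 < norm g ^ k" using real_arch_pow[OF g1] by blast
  have "k \<le> 2 ^ k" using less_exp[of k] by simp
  hence "norm g ^ k \<le> norm g ^ (2 ^ k)" using g1 by (intro power_increasing) auto
  also have "\<dots> \<le> 2" using assms sa_pow2 by metis
  finally show False using k by simp
qed


lemma one_minus_PpP: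
  assumes P: "P * P = P" "st P = P" and p: "p * p = p" "st p = p"
  shows "norm (1 - P * p * P) \<le> 1"
proof -
  define g where "g = 1 - P * p * P"
  define y where "y = P * (1 - p) * P"
  have sag: "st g = g" unfolding g_def using P p
    by (simp add: st_diff st_one st_mult mult.assoc)
  have aux: "P * (P * x) = P * x" "x * (P * P) = x * P" "P * (P * p) = P * p" for x by (metis P(1) mult.assoc)+
  have gy: "g = (1 - P) + y" unfolding g_def y_def using P
    by (simp add: algebra_simps aux)
  have Py: "(1 - P) * y = 0" unfolding y_def using P by (simp add: algebra_simps aux)
  have yP: "y * (1 - P) = 0" unfolding y_def using P by (simp add: algebra_simps aux)
  have PP: "(1 - P) * (1 - P) = 1 - P" using P by (simp add: algebra_simps)
  have pw: "g ^ Suc N = (1 - P) + y ^ Suc N" for N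
  proof (induction N)
    case 0 then show ?case using gy by simp
  next
    case (Suc N)
    have "g ^ Suc (Suc N) = g ^ Suc N * g" by (rule power_Suc2)
    also have "\<dots> = ((1 - P) + y ^ Suc N) * ((1 - P) + y)"
      unfolding Suc.IH using gy by simp
    also have "\<dots> = (1 - P) * (1 - P) + (1 - P) * y + y ^ Suc N * (1 - P) + y ^ Suc N * y"
      by (simp add: algebra_simps aux)
    also have "y ^ Suc N * (1 - P) = 0" by (simp only: power_Suc2 mult.assoc yP mult_zero_right)
    finally show ?case using Py PP by (simp add: power_Suc2 power_commutes mult.assoc)
  qed
  have n1: "norm (1 - P) \<le> 1"
    by (rule proj_norm) (use P in \<open>simp_all add: algebra_simps st_diff st_one\<close>)
  have np: "norm (1 - p) \<le> 1"
    by (rule proj_norm) (use p in \<open>simp_all add: algebra_simps st_diff st_one\<close>)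
  have nP: "norm P \<le> 1" using proj_norm P by blast
  have ny: "norm y \<le> 1"
  proof -
    have "norm y \<le> norm (P * (1 - p)) * norm P" unfolding y_def by (rule norm_mult_ineq)
    also have "\<dots> \<le> (norm P * norm (1 - p)) * norm P"
      by (intro mult_right_mono norm_mult_ineq) auto
    also have "\<dots> \<le> 1" using nP np by (simp add: mult_le_one)
    finally show ?thesis .
  qed
  have "norm (g ^ (2 ^ k)) \<le> 2" for k
  proof -
    obtain N where N: "2 ^ k = Suc N" using not0_implies_Suc by fastforce
    have "norm (g ^ (2 ^ k)) \<le> norm (1 - P) + norm (y ^ Suc N)"
      unfolding N pw by (rule norm_triangle_ineq)
    also have "norm (y ^ Suc N) \<le> norm y ^ Suc N" by (rule norm_power_ineq)
    also have "norm y ^ Suc N \<le> 1" using ny by (intro power_le_one) auto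
    finally show ?thesis using n1 by simp
  qed
  thus ?thesis using sa_bound[OF sag] unfolding g_def by blast
qed


lemma circ1:
  assumes sc: "st c = c" and c1: "norm (1 + c) \<le> 1" and c2: "norm (1 - c) \<le> 1" and z: "cmod z = 1"
  shows "norm (1 + scC z c) \<le> 1"
proof -
  let ?x = "1 + scC z c"
  define a where "a = Re z"
  have sx: "st ?x = 1 + scC (cnj z) c" by (simp add: st_add st_one st_S sc)
  have zz: "cnj z * z = 1" by (metis complex_norm_square mult.commute z of_real_1 power_one)
  have zc: "z + cnj z = complex_of_real (2 * a)" unfolding a_def by (simp add: complex_add_cnj)
  have e0: "st ?x * ?x = 1 + (scC z c + scC (cnj z) c) + scC (cnj z) c * scC z c"
    unfolding sx by (simp add: algebra_simps)
  have f1: "scC (cnj z) c * scC z c = c * c" by (simp add: S_mult zz S_one)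
  have f2: "scC z c + scC (cnj z) c = (2 * a) *\<^sub>R c" by (simp only: S_add_left[symmetric] zc S_real)
  have e1: "st ?x * ?x = 1 + (2 * a) *\<^sub>R c + c * c" using e0 unfolding f1 f2 .
  have e2: "1 + (2 * a) *\<^sub>R c + c * c = ((1 + a) / 2) *\<^sub>R ((1 + c) * (1 + c)) + ((1 - a) / 2) *\<^sub>R ((1 - c) * (1 - c))"
    by (rule e2_lemma)
  have a1: "\<bar>a\<bar> \<le> 1" unfolding a_def using abs_Re_le_cmod[of z] z by simp
  have n1: "norm ((1 + c) * (1 + c)) \<le> 1"
    by (rule order_trans[OF norm_mult_ineq]) (use c1 in \<open>simp add: mult_le_one\<close>)
  have n2: "norm ((1 - c) * (1 - c)) \<le> 1"
    by (rule order_trans[OF norm_mult_ineq]) (use c2 in \<open>simp add: mult_le_one\<close>)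
  have "norm (st ?x * ?x) \<le> ((1 + a) / 2) * norm ((1 + c) * (1 + c)) + ((1 - a) / 2) * norm ((1 - c) * (1 - c))"
    unfolding e1 e2 using a1 by (intro order_trans[OF norm_triangle_ineq]) simp
  also have "\<dots> \<le> ((1 + a) / 2) * 1 + ((1 - a) / 2) * 1"
    using a1 n1 n2 by (intro add_mono mult_left_mono) auto
  finally have "(norm ?x)\<^sup>2 \<le> 1\<^sup>2" using cstar_id by (simp add: add_divide_distrib[symmetric])
  thus ?thesis by (rule power2_le_imp_le) simp
qed


lemma circ_step:
  assumes Q: "\<And>z. cmod z = \<rho> \<Longrightarrow> norm (1 + scC z c) \<le> 1" and w: "cmod w = sqrt 2 * \<rho>"
  shows "norm (1 + scC w c) \<le> 1"
proof -
  define z where "z = w / (1 + \<i>)"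
  have c1i: "cmod (1 + \<i>) = sqrt 2" by (simp add: cmod_def)
  have zr: "cmod z = \<rho>" unfolding z_def using w c1i by (simp add: norm_divide)
  have izr: "cmod (\<i> * z) = \<rho>" using zr by (simp add: norm_mult)
  have nz: "1 + \<i> \<noteq> 0" by (simp add: complex_eq_iff)
  have "z + \<i> * z = (1 + \<i>) * z" by (simp add: algebra_simps)
  hence wz: "z + \<i> * z = w" unfolding z_def using nz by simp
  let ?X = "scC z c" and ?Y = "scC (\<i> * z) c"
  have sq: "(1 + ?X) * (1 + ?X) + (1 + ?Y) * (1 + ?Y) = 1 + 1 + (?X + ?X + ?Y + ?Y) + (?X * ?X + ?Y * ?Y)"
    by (simp add: algebra_simps)
  have zz0: "z * z + \<i> * z * (\<i> * z) = 0" by (simp add: algebra_simps power2_eq_square[symmetric])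
  have q1: "?X * ?X + ?Y * ?Y = 0"
    by (simp only: S_mult S_add_left[symmetric] zz0 S_zero)
  have q2: "?X + ?X + ?Y + ?Y = 2 *\<^sub>R scC w c"
  proof -
    have "?X + ?X + ?Y + ?Y = scC (complex_of_real 2 * w) c"
      by (simp only: S_add_left[symmetric] wz[symmetric]) (simp add: algebra_simps)
    also have "\<dots> = 2 *\<^sub>R scC w c" by (simp only: S_S[symmetric] S_real)
    finally show ?thesis .
  qed
  have key: "2 *\<^sub>R (1 + scC w c) = (1 + ?X) * (1 + ?X) + (1 + ?Y) * (1 + ?Y)"
    unfolding sq q1 q2 by (simp add: scaleR_2 algebra_simps)
  have n1: "norm ((1 + ?X) * (1 + ?X)) \<le> 1"
    using Q[OF zr] by (intro order_trans[OF norm_mult_ineq]) (simp add: mult_le_one)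
  have n2: "norm ((1 + ?Y) * (1 + ?Y)) \<le> 1"
    using Q[OF izr] by (intro order_trans[OF norm_mult_ineq]) (simp add: mult_le_one)
  have "2 * norm (1 + scC w c) = norm (2 *\<^sub>R (1 + scC w c))" by simp
  also have "\<dots> \<le> 2" unfolding key using n1 n2 by (intro order_trans[OF norm_triangle_ineq]) simp
  finally show ?thesis by simp
qed

lemma circ_zero:
  assumes sc: "st c = c" and c1: "norm (1 + c) \<le> 1" and c2: "norm (1 - c) \<le> 1"
  shows "c = 0"
proof -
  have Q: "cmod z = sqrt 2 ^ k \<Longrightarrow> norm (1 + scC z c) \<le> 1" for k z
  proof (induction k arbitrary: z)
    case 0 then show ?case using circ1[OF sc c1 c2] by simp
  next
    case (Suc k) then show ?case using circ_step[of "sqrt 2 ^ k" c z] by simp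
  qed
  have b: "2 ^ k * norm c \<le> 2" for k :: nat
  proof -
    have "cmod (complex_of_real (sqrt 2 ^ (2 * k))) = sqrt 2 ^ (2 * k)" by (simp add: norm_power)
    hence "norm (1 + scC (complex_of_real (sqrt 2 ^ (2 * k))) c) \<le> 1" by (rule Q)
    hence h: "norm (1 + (2 ^ k) *\<^sub>R c) \<le> 1" unfolding S_real by (simp add: power_mult)
    have "norm ((2 ^ k) *\<^sub>R c) \<le> norm (1 + (2 ^ k) *\<^sub>R c) + norm (1::'a)"
      using norm_triangle_ineq4[of "1 + (2 ^ k) *\<^sub>R c" 1] by simp
    thus ?thesis using h by simp
  qed
  show ?thesis
  proof (rule ccontr)
    assume "c \<noteq> 0"
    hence pos: "norm c > 0" by simp
    obtain k where k: "2 / norm c < 2 ^ k" using real_arch_pow[of 2 "2 / norm c"] by auto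
    hence "2 < 2 ^ k * norm c" using pos by (simp add: field_simps)
    thus False using b[of k] by simp
  qed
qed


lemma posD_zero: assumes sh: "st h = h" and p1: "posD h" and p2: "posD (- h)" shows "h = 0"
proof -
  obtain t s where t: "t \<ge> 0" "norm (of_real t - h) \<le> t" and s: "s \<ge> 0" "norm (of_real s + h) \<le> s"
    using p1 p2 unfolding posD_def by auto
  show ?thesis
  proof (cases "t + s = 0")
    case True
    hence "t = 0" using t s by simp
    thus ?thesis using t by simp
  next
    case False
    hence T: "t + s > 0" using t s by simp
    define c where "c = (1 / (t + s)) *\<^sub>R h"
    have sc: "st c = c" unfolding c_def by (simp add: st_scaleR sh)
    have TT: "(1 / (t + s)) *\<^sub>R (of_real (t + s) :: 'a) = 1" using T by (simp add: of_real_def)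
    have "1 - c = (1 / (t + s)) *\<^sub>R (of_real (t + s) - h)"
      unfolding c_def scaleR_diff_right TT ..
    also have "of_real (t + s) - h = of_real s + (of_real t - h)" by (simp add: algebra_simps)
    finally have "1 - c = (1 / (t + s)) *\<^sub>R (of_real s + (of_real t - h))" .
    hence "norm (1 - c) = (1 / (t + s)) * norm (of_real s + (of_real t - h))" using T by simp
    also have "\<dots> \<le> (1 / (t + s)) * (s + t)"
      using t s T by (intro mult_left_mono order_trans[OF norm_triangle_ineq]) (auto simp: abs_of_nonneg)
    finally have c2: "norm (1 - c) \<le> 1" using T by (simp add: add.commute)
    have "1 + c = (1 / (t + s)) *\<^sub>R (of_real (t + s) + h)"
      unfolding c_def scaleR_add_right TT ..
    also have "of_real (t + s) + h = of_real t + (of_real s + h)" by (simp add: algebra_simps)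
    finally have "1 + c = (1 / (t + s)) *\<^sub>R (of_real t + (of_real s + h))" .
    hence "norm (1 + c) = (1 / (t + s)) * norm (of_real t + (of_real s + h))" using T by simp
    also have "\<dots> \<le> (1 / (t + s)) * (t + s)"
      using t s T by (intro mult_left_mono order_trans[OF norm_triangle_ineq]) (auto simp: abs_of_nonneg)
    finally have c1: "norm (1 + c) \<le> 1" using T by simp
    have "c = 0" by (rule circ_zero[OF sc c1 c2])
    thus ?thesis unfolding c_def using T by simp
  qed
qed

lemma ortho:
  assumes fin: "finite V" and pr: "\<And>c. c \<in> V \<Longrightarrow> p c * p c = p c \<and> st (p c) = p c"
    and sum1: "sum p V = 1" and a: "a \<in> V" and b: "b \<in> V" and ab: "a \<noteq> b"
  shows "p b * p a = 0 \<and> p a * p b = 0"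
proof -
  define P where "P = p a"
  have P: "P * P = P" "st P = P" using pr[OF a] unfolding P_def by auto
  define h where "h c = P * p c * P" for c
  have sumV: "sum p V = P + sum p (V - {a})" unfolding P_def using fin a by (simp add: sum.remove)
  have "sum h (V - {a}) = P * sum p (V - {a}) * P"
    unfolding h_def by (simp add: sum_distrib_left sum_distrib_right)
  also have "sum p (V - {a}) = 1 - P" using sumV sum1 by (simp add: algebra_simps)
  also have "P * (1 - P) * P = 0" using P by (simp add: algebra_simps)
  finally have s0: "sum h (V - {a}) = 0" .
  have "sum h (V - {a}) = h b + sum h (V - {a} - {b})"
    using fin b ab by (simp add: sum.remove)
  hence mh: "- h b = sum h (V - {a} - {b})" using s0 by (metis add.inverse_unique)
  have pos: "posD (h c)" if "c \<in> V" for c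
    unfolding posD_def h_def
    by (intro exI[of _ 1]) (use one_minus_PpP[OF P, of "p c"] pr[OF that] in simp)
  have "posD (- h b)" unfolding mh using fin by (intro posD_sum pos) auto
  moreover have "st (h b) = h b" unfolding h_def using P pr[OF b] by (simp add: st_mult mult.assoc)
  ultimately have hb: "h b = 0" using posD_zero pos[OF b] by blast
  have "(norm (p b * P))\<^sup>2 = norm (st (p b * P) * (p b * P))" by (simp add: cstar_id)
  also have pbb: "p b * (p b * x) = p b * x" for x using pr[OF b] by (metis mult.assoc)
  have "st (p b * P) * (p b * P) = h b" unfolding h_def using P pr[OF b] by (simp add: st_mult mult.assoc pbb)
  finally have z1: "p b * P = 0" using hb by simp
  have "P * p b = st (p b * P)" using P pr[OF b] by (simp add: st_mult)
  hence "P * p b = 0" using z1 by (simp add: st_zero)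
  thus ?thesis using z1 unfolding P_def by simp
qed

end


lemma walk0: "walk_len E 0 x y \<longleftrightarrow> x = y"
  unfolding walk_len_def by auto

lemma walk1: "walk_len E 1 x y \<longleftrightarrow> E x y"
proof
  assume "walk_len E 1 x y" then show "E x y" unfolding walk_len_def by auto
next
  assume "E x y" then show "walk_len E 1 x y" unfolding walk_len_def
    by (intro exI[of _ "\<lambda>r. if r = 0 then x else y"]) auto
qed

lemma walk_rev:
  assumes sg: "simple_graph n E" and w: "walk_len E m x y" shows "walk_len E m y x"
proof -
  obtain f where f: "f 0 = x" "f m = y" "\<forall>r<m. E (f r) (f (Suc r))" using w unfolding walk_len_def by blast
  have sym: "E a b \<Longrightarrow> E b a" for a b using sg unfolding simple_graph_def by blast
  show ?thesis unfolding walk_len_def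
  proof (intro exI[of _ "\<lambda>r. f (m - r)"] conjI allI impI)
    fix r assume r: "r < m"
    have "E (f (m - Suc r)) (f (Suc (m - Suc r)))" using f(3) r by simp
    moreover have "Suc (m - Suc r) = m - r" using r by simp
    ultimately show "E (f (m - r)) (f (m - Suc r))" using sym by simp
  qed (use f in simp_all)
qed

lemma gdist_sym: "simple_graph n E \<Longrightarrow> gdist E x y = gdist E y x"
  unfolding gdist_def by (metis walk_rev)

lemma walk_gdist:
  assumes "connected_graph n E" "x \<in> {1..n}" "y \<in> {1..n}" shows "walk_len E (gdist E x y) x y"
proof -
  obtain m where "walk_len E m x y" using assms unfolding connected_graph_def by blast
  thus ?thesis unfolding gdist_def by (rule LeastI)
qed

lemma gdist_le: "walk_len E m x y \<Longrightarrow> gdist E x y \<le> m"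
  unfolding gdist_def by (rule Least_le)

lemma gdist_self: "gdist E x x = 0"
  using gdist_le[of E 0 x x] walk0 by auto

lemma gdist_0:
  assumes "connected_graph n E" "x \<in> {1..n}" "y \<in> {1..n}" "gdist E x y = 0" shows "x = y"
  using walk_gdist[OF assms(1-3)] assms(4) walk0 by metis

lemma gdist_1_iff:
  assumes sg: "simple_graph n E" and c: "connected_graph n E" and "x \<in> {1..n}" "y \<in> {1..n}"
  shows "gdist E x y = 1 \<longleftrightarrow> E x y"
proof
  assume "gdist E x y = 1" then show "E x y" using walk_gdist[OF c assms(3,4)] walk1 by metis
next
  assume e: "E x y"
  hence "x \<noteq> y" using sg unfolding simple_graph_def by auto
  hence "gdist E x y \<noteq> 0" using gdist_self by (metis gdist_0[OF c assms(3,4)])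
  moreover have "gdist E x y \<le> 1" using e walk1 gdist_le by metis
  ultimately show "gdist E x y = 1" by simp
qed

lemma gdist_less: "m < gdist E x y \<Longrightarrow> \<not> walk_len E m x y"
  using gdist_le by fastforce

lemma path_zero:
  fixes u :: "nat \<Rightarrow> nat \<Rightarrow> 'a::ring_1"
  assumes sg: "simple_graph n E"
    and rows: "\<And>i. i \<in> {1..n} \<Longrightarrow> (\<Sum>l\<in>{1..n}. u i l) = 1"
    and R3: "\<And>i j k l. i \<in> {1..n} \<Longrightarrow> j \<in> {1..n} \<Longrightarrow> k \<in> {1..n} \<Longrightarrow> l \<in> {1..n} \<Longrightarrow>
               E i k \<noteq> E j l \<Longrightarrow> u i j * u k l = 0"
  shows "(\<forall>r<Suc m. E (f r) (f (Suc r))) \<Longrightarrow> j \<in> {1..n} \<Longrightarrow> l \<in> {1..n} \<Longrightarrow>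
         \<not> walk_len E (Suc m) j l \<Longrightarrow> u (f 0) j * u (f (Suc m)) l = 0"
proof (induction m arbitrary: f j)
  have inV: "E a b \<Longrightarrow> a \<in> {1..n} \<and> b \<in> {1..n}" for a b using sg unfolding simple_graph_def by blast
  case 0
  then show ?case using walk1[of E j l] inV[of "f 0" "f 1"] by (intro R3) auto
next
  have inV: "E a b \<Longrightarrow> a \<in> {1..n} \<and> b \<in> {1..n}" for a b using sg unfolding simple_graph_def by blast
  case (Suc m)
  have e01: "E (f 0) (f 1)" using Suc.prems(1) by auto
  have f1: "f 1 \<in> {1..n}" "f 0 \<in> {1..n}" using inV[OF e01] by auto
  have "u (f 0) j * u (f (Suc (Suc m))) l = u (f 0) j * (\<Sum>y\<in>{1..n}. u (f 1) y) * u (f (Suc (Suc m))) l"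
    using rows[OF f1(1)] by simp
  also have "\<dots> = (\<Sum>y\<in>{1..n}. u (f 0) j * u (f 1) y * u (f (Suc (Suc m))) l)"
    by (simp add: sum_distrib_left sum_distrib_right)
  also have "\<dots> = 0"
  proof (rule sum.neutral, rule ballI)
    fix y assume y: "y \<in> {1..n}"
    show "u (f 0) j * u (f 1) y * u (f (Suc (Suc m))) l = 0"
    proof (cases "E j y")
      case False
      hence "u (f 0) j * u (f 1) y = 0" using e01 f1 y Suc.prems(2) by (intro R3) auto
      thus ?thesis by simp
    next
      case True
      have "\<not> walk_len E (Suc m) y l"
      proof
        assume "walk_len E (Suc m) y l"
        then obtain g where g: "g 0 = y" "g (Suc m) = l" "\<forall>r<Suc m. E (g r) (g (Suc r))"
          unfolding walk_len_def by blast
        have "walk_len E (Suc (Suc m)) j l" unfolding walk_len_def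
          by (intro exI[of _ "\<lambda>r. if r = 0 then j else g (r - 1)"])
             (use g True in \<open>auto simp: less_Suc_eq_0_disj\<close>)
        thus False using Suc.prems(4) by simp
      qed
      hence "u ((f \<circ> Suc) 0) y * u ((f \<circ> Suc) (Suc m)) l = 0"
        using Suc.IH[of "f \<circ> Suc" y] Suc.prems y by auto
      hence "u (f 1) y * u (f (Suc (Suc m))) l = 0" by simp
      thus ?thesis by (simp add: mult.assoc)
    qed
  qed
  finally show ?case .
qed



lemma zero_lemma:
  fixes u :: "nat \<Rightarrow> nat \<Rightarrow> 'a::{real_normed_algebra_1,banach}"
  assumes sg: "simple_graph n E" and cg: "connected_graph n E"
    and cs: "cstar_algebra scC st" and qr: "qaut_rep n E st u"
    and V: "i \<in> {1..n}" "j \<in> {1..n}" "k \<in> {1..n}" "l \<in> {1..n}"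
    and ne: "gdist E i k \<noteq> gdist E j l"
  shows "u i j * u k l = 0"
proof -
  have proj: "\<And>a b. a \<in> {1..n} \<Longrightarrow> b \<in> {1..n} \<Longrightarrow> u a b * u a b = u a b \<and> st (u a b) = u a b"
    using qr unfolding qaut_rep_def by metis
  have rows: "\<And>a. a \<in> {1..n} \<Longrightarrow> (\<Sum>b\<in>{1..n}. u a b) = 1"
    and cols: "\<And>a. a \<in> {1..n} \<Longrightarrow> (\<Sum>b\<in>{1..n}. u b a) = 1"
    using qr unfolding qaut_rep_def by auto
  have R3: "\<And>a b c d. a \<in> {1..n} \<Longrightarrow> b \<in> {1..n} \<Longrightarrow> c \<in> {1..n} \<Longrightarrow> d \<in> {1..n} \<Longrightarrow>
               E a c \<noteq> E b d \<Longrightarrow> u a b * u c d = 0"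
    using qr unfolding qaut_rep_def by blast
  have R3t: "\<And>a b c d. a \<in> {1..n} \<Longrightarrow> b \<in> {1..n} \<Longrightarrow> c \<in> {1..n} \<Longrightarrow> d \<in> {1..n} \<Longrightarrow>
               E a c \<noteq> E b d \<Longrightarrow> (\<lambda>x y. u y x) a b * (\<lambda>x y. u y x) c d = 0"
    using R3 by (metis (no_types))
  consider "gdist E i k = 0" | "gdist E j l = 0"
    | "0 < gdist E i k" "gdist E i k < gdist E j l" | "0 < gdist E j l" "gdist E j l < gdist E i k"
    using ne by linarith
  then show ?thesis
  proof cases
    case 1
    hence ik: "i = k" using gdist_0[OF cg V(1,3)] by simp
    hence "j \<noteq> l" using 1 ne gdist_self by metis
    thus ?thesis using ortho[OF cs, of "{1..n}" "u i" j l] proj rows V ik by auto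
  next
    case 2
    hence jl: "j = l" using gdist_0[OF cg V(2,4)] by simp
    hence "i \<noteq> k" using 2 ne gdist_self by metis
    thus ?thesis using ortho[OF cs, of "{1..n}" "\<lambda>x. u x j" i k] proj cols V jl by auto
  next
    case 3
    then obtain m where m: "gdist E i k = Suc m" using not0_implies_Suc by blast
    obtain f where f: "f 0 = i" "f (Suc m) = k" "\<forall>r<Suc m. E (f r) (f (Suc r))"
      using walk_gdist[OF cg V(1,3)] m unfolding walk_len_def by metis
    have "\<not> walk_len E (Suc m) j l" using 3 m gdist_less by metis
    thus ?thesis using path_zero[OF sg rows R3, where m=m and f=f and j=j and l=l] f V by simp
  next
    case 4
    then obtain m where m: "gdist E j l = Suc m" using not0_implies_Suc by blast
    obtain f where f: "f 0 = j" "f (Suc m) = l" "\<forall>r<Suc m. E (f r) (f (Suc r))"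
      using walk_gdist[OF cg V(2,4)] m unfolding walk_len_def by metis
    have "\<not> walk_len E (Suc m) i k" using 4 m gdist_less by metis
    thus ?thesis using path_zero[OF sg cols R3t, where m=m and f=f and j=i and l=k] f V by simp
  qed
qed



theorem lemma3p6:
  fixes n :: nat and E :: "nat \<Rightarrow> nat \<Rightarrow> bool"
    and scC :: "complex \<Rightarrow> 'a::{real_normed_algebra_1,banach} \<Rightarrow> 'a"
    and st :: "'a \<Rightarrow> 'a" and u :: "nat \<Rightarrow> nat \<Rightarrow> 'a"
    and i j k l m :: nat
  assumes "simple_graph n E" and "connected_graph n E"
    and "cstar_algebra scC st" and "qaut_rep n E st u"
    and "i \<in> {1..n}" "j \<in> {1..n}" "k \<in> {1..n}" "l \<in> {1..n}"
    and "gdist E i k = m" and "gdist E j l = m"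
  shows "(\<forall>q s t. q \<in> {1..n} \<and> gdist E j q = s \<and> gdist E q l = t \<and>
            (\<forall>a\<in>{1..n}. gdist E a k = t \<longrightarrow> u k l * u a q = u a q * u k l) \<longrightarrow>
            u i j * u k l = u i j * u k l *
              (\<Sum>p\<in>{p\<in>{1..n}. gdist E l p = m \<and> gdist E p q = s}. u i p))
       \<and> (m = 2 \<and> gstar_rel n E u \<longrightarrow>
            (\<forall>q\<in>{1..n}. E j q \<and> E q l \<longrightarrow>
              u i j * u k l = u i j * u k l *
                (\<Sum>p\<in>{p\<in>{1..n}. gdist E l p = 2 \<and> E p q}. u i p)))"
proof -
  note sg = assms(1) and cg = assms(2) and cs = assms(3) and qr = assms(4)
  note V = assms(5-8)
  have Z: "\<And>a b c d. a \<in> {1..n} \<Longrightarrow> b \<in> {1..n} \<Longrightarrow> c \<in> {1..n} \<Longrightarrow> d \<in> {1..n} \<Longrightarrow>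
            gdist E a c \<noteq> gdist E b d \<Longrightarrow> u a b * u c d = 0"
    using zero_lemma[OF sg cg cs qr] by blast
  have sym: "\<And>x y. gdist E x y = gdist E y x" using gdist_sym[OF sg] by blast
  have rows: "\<And>a. a \<in> {1..n} \<Longrightarrow> (\<Sum>b\<in>{1..n}. u a b) = 1"
    and cols: "\<And>a. a \<in> {1..n} \<Longrightarrow> (\<Sum>b\<in>{1..n}. u b a) = 1"
    using qr unfolding qaut_rep_def by auto
  have P1: "u i j * u k l = u i j * u k l *
              (\<Sum>p\<in>{p\<in>{1..n}. gdist E l p = m \<and> gdist E p q = s}. u i p)"
    if q: "q \<in> {1..n}" and s: "gdist E j q = s" and t: "gdist E q l = t"
      and H: "\<forall>a\<in>{1..n}. gdist E a k = t \<longrightarrow> u k l * u a q = u a q * u k l" for q s t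
  proof -
    define S where "S = {p\<in>{1..n}. gdist E l p = m \<and> gdist E p q = s}"
    have comm: "u k l * u a q = u a q * u k l" if a: "a \<in> {1..n}" for a
    proof (cases "gdist E a k = t")
      case True then show ?thesis using H a by blast
    next
      case False
      have "u k l * u a q = 0" using Z[OF V(3,4) a q] False t sym by metis
      moreover have "u a q * u k l = 0" using Z[OF a q V(3,4)] False t by metis
      ultimately show ?thesis by simp
    qed
    have T0: "u i j * u k l * u i p = 0" if p: "p \<in> {1..n} - S" for p
    proof (cases "gdist E l p = m")
      case False
      have "u k l * u i p = 0" using Z[OF V(3,4,1)] p False assms(9) sym by auto
      thus ?thesis by (simp add: mult.assoc)
    next
      case True
      hence pq: "gdist E p q \<noteq> s" using p unfolding S_def by auto
      have "u i j * u k l * u i p = u i j * u k l * (\<Sum>a\<in>{1..n}. u a q) * u i p"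
        using cols[OF q] by simp
      also have "\<dots> = (\<Sum>a\<in>{1..n}. u i j * u k l * u a q * u i p)"
        by (simp add: sum_distrib_left sum_distrib_right)
      also have "\<dots> = 0"
      proof (rule sum.neutral, rule ballI)
        fix a assume a: "a \<in> {1..n}"
        show "u i j * u k l * u a q * u i p = 0"
        proof (cases "gdist E a i = gdist E q p")
          case False
          hence "u a q * u i p = 0" using Z[OF a q V(1)] p by auto
          thus ?thesis by (simp add: mult.assoc)
        next
          case True
          hence "gdist E i a \<noteq> gdist E j q" using pq s sym by metis
          hence "u i j * u a q = 0" using Z[OF V(1,2) a q] by blast
          hence "u i j * u a q * u k l * u i p = 0" by simp
          moreover have "u i j * u k l * u a q = u i j * u a q * u k l"
            using comm[OF a] by (simp add: mult.assoc)
          ultimately show ?thesis by simp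
        qed
      qed
      finally show ?thesis .
    qed
    have SV: "S \<subseteq> {1..n}" unfolding S_def by auto
    have "u i j * u k l = u i j * u k l * (\<Sum>p\<in>{1..n}. u i p)" using rows[OF V(1)] by simp
    also have "(\<Sum>p\<in>{1..n}. u i p) = (\<Sum>p\<in>{1..n} - S. u i p) + (\<Sum>p\<in>S. u i p)"
      using SV by (simp add: sum.subset_diff)
    also have "u i j * u k l * \<dots> = (\<Sum>p\<in>{1..n} - S. u i j * u k l * u i p) + u i j * u k l * (\<Sum>p\<in>S. u i p)"
      by (simp add: distrib_left sum_distrib_left)
    also have "(\<Sum>p\<in>{1..n} - S. u i j * u k l * u i p) = 0" using T0 by (simp add: sum.neutral)
    finally show ?thesis unfolding S_def by simp
  qed
  show ?thesis
  proof (intro conjI allI impI ballI)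
    fix q s t
    assume "q \<in> {1..n} \<and> gdist E j q = s \<and> gdist E q l = t \<and>
            (\<forall>a\<in>{1..n}. gdist E a k = t \<longrightarrow> u k l * u a q = u a q * u k l)"
    thus "u i j * u k l = u i j * u k l *
              (\<Sum>p\<in>{p\<in>{1..n}. gdist E l p = m \<and> gdist E p q = s}. u i p)"
      using P1 by blast
  next
    fix q assume m2: "m = 2 \<and> gstar_rel n E u" and q: "q \<in> {1..n}" and e: "E j q \<and> E q l"
    have s1: "gdist E j q = 1" using gdist_1_iff[OF sg cg V(2) q] e by simp
    have t1: "gdist E q l = 1" using gdist_1_iff[OF sg cg q V(4)] e by simp
    have H: "\<forall>a\<in>{1..n}. gdist E a k = 1 \<longrightarrow> u k l * u a q = u a q * u k l"
    proof (intro ballI impI)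
      fix a assume a: "a \<in> {1..n}" and d: "gdist E a k = 1"
      have "E k a" using gdist_1_iff[OF sg cg V(3) a] d sym by metis
      moreover have "E l q" using e sg unfolding simple_graph_def by blast
      ultimately show "u k l * u a q = u a q * u k l"
        using m2 V(3,4) a q unfolding gstar_rel_def by blast
    qed
    have eqS: "{p\<in>{1..n}. gdist E l p = m \<and> gdist E p q = 1} = {p\<in>{1..n}. gdist E l p = 2 \<and> E p q}"
      using gdist_1_iff[OF sg cg _ q] m2 by auto
    show "u i j * u k l = u i j * u k l * (\<Sum>p\<in>{p\<in>{1..n}. gdist E l p = 2 \<and> E p q}. u i p)"
      using P1[OF q s1 t1 H] unfolding eqS .
  qed
qed


end
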